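(* Let $1<p,q<\infty$ and $\alpha,\beta>0$ with $\frac{\alpha}{p}+\frac{\beta}{q}=1$, and let $a<b$. Let $\lambda_1(p,q)$ be the first Dirichlet eigenvalue on $(a,b)$ of the system $$-(|u'|^{p-2}u')'=\lambda\alpha|u|^{\alpha-2}u|v|^\beta,\qquad -(|v'|^{q-2}v')'=\lambda\beta|u|^\alpha|v|^{\beta-2}v,$$ with $u(a)=u(b)=v(a)=v(b)=0$, and for $s>1$ let $\Lambda_1(s)$ be the first Dirichlet eigenvalue of $-(|\varphi'|^{s-2}\varphi')'=\Lambda|\varphi|^{s-2}\varphi$ on $(a,b)$. Then $$\left(\alpha^{\frac{\alpha}{p}}\beta^{\frac{\beta}{q}}\right)^{-1}\left(\frac{2}{\pi_{\alpha+\beta}}\right)^{\alpha+\beta}\frac{\Lambda_1(\alpha+\beta)}{\alpha+\beta-1}\le\lambda_1(p,q).$$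
   Context: $\lambda_1(p,q)$ is the infimum over $(u,v)\in W^{1,p}_0(a,b)\times W^{1,q}_0(a,b)$ with $\int_a^b|u|^\alpha|v|^\beta>0$ of $\big(\frac1p\int_a^b|u'|^p+\frac1q\int_a^b|v'|^q\big)/\int_a^b|u|^\alpha|v|^\beta$; $\Lambda_1(s)=\inf\{\int_a^b|u'|^s/\int_a^b|u|^s: 0\ne u\in W^{1,s}_0(a,b)\}$. For $s>1$, $\pi_s=2\int_0^1\frac{dt}{(1-t^s)^{1/s}}$. *)

theory Defs
  imports "HOL-Analysis.Analysis"
begin

text \<open>One-dimensional Sobolev space W^{1,p}_0(a,b): u is (the continuous representative of)
  an absolutely continuous function on [a,b] with u(a) = u(b) = 0 whose derivative g
  lies in L^p(a,b).\<close>
definition W10 :: "real \<Rightarrow> real \<Rightarrow> real \<Rightarrow> (real \<Rightarrow> real) \<Rightarrow> (real \<Rightarrow> real) \<Rightarrow> bool" where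
  "W10 p a b u g \<longleftrightarrow>
     set_integrable lborel {a..b} g \<and>
     set_integrable lborel {a..b} (\<lambda>t. \<bar>g t\<bar> powr p) \<and>
     (\<forall>x\<in>{a..b}. u x = (LINT t:{a..x}|lborel. g t)) \<and>
     u b = 0"

definition lambda1 :: "real \<Rightarrow> real \<Rightarrow> real \<Rightarrow> real \<Rightarrow> real \<Rightarrow> real \<Rightarrow> real" where
  "lambda1 p q \<alpha> \<beta> a b = Inf
     {((1/p) * (LINT t:{a..b}|lborel. \<bar>g t\<bar> powr p) + (1/q) * (LINT t:{a..b}|lborel. \<bar>h t\<bar> powr q))
        / (LINT t:{a..b}|lborel. \<bar>u t\<bar> powr \<alpha> * \<bar>v t\<bar> powr \<beta>)
      | u g v h. W10 p a b u g \<and> W10 q a b v h \<and>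
                 (LINT t:{a..b}|lborel. \<bar>u t\<bar> powr \<alpha> * \<bar>v t\<bar> powr \<beta>) > 0}"

definition Lambda1 :: "real \<Rightarrow> real \<Rightarrow> real \<Rightarrow> real" where
  "Lambda1 s a b = Inf
     {(LINT t:{a..b}|lborel. \<bar>g t\<bar> powr s) / (LINT t:{a..b}|lborel. \<bar>u t\<bar> powr s)
      | u g. W10 s a b u g \<and> (\<exists>x\<in>{a..b}. u x \<noteq> 0)}"

definition pi_s :: "real \<Rightarrow> real" where
  "pi_s s = 2 * (LBINT t=0..1. 1 / (1 - t powr s) powr (1/s))"

end

theory Submission
  imports Defs
begin

definition fs :: "real \<Rightarrow> real \<Rightarrow> real" where "fs s t = 1 / (1 - t powr s) powr (1/s)"

lemma borel_leb_on: "h \<in> borel_measurable borel \<Longrightarrow> h \<in> borel_measurable (lebesgue_on S)"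
  apply (rule measurable_restrict_space1)
  apply (rule measurable_completion)
  by simp

lemma fs_borel: "fs s \<in> borel_measurable borel"
  unfolding fs_def by measurable

lemma powr_refl_int:
  fixes a :: real assumes a: "a > -1"
  shows "((\<lambda>x. (1 - x) powr a) has_integral (1/(a+1))) {0..1}"
proof -
  have h: "((\<lambda>x. x powr a) has_integral (1/(a+1))) {0..1}"
    using has_integral_powr_from_0[OF a, of 1] by simp
  have "((\<lambda>x. (\<lambda>y. y powr a) (-x)) has_integral (1/(a+1))) {-1..0}"
    using has_integral_reflect_lemma_real[OF h] by simp
  from has_integral_shift_real_ivl[OF this, of "-1"]
  show ?thesis by simp
qed

lemma tps: fixes t s :: real assumes "0 \<le> t" "t \<le> 1" "1 < s" shows "t powr s \<le> t"
  by (metis assms(1,2,3) order.order_iff_strict powr_le_one_le powr_nonneg_iff)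

lemma fs_bound: assumes s: "1 < s" and t: "0 \<le> t" "t \<le> 1"
  shows "0 \<le> fs s t \<and> fs s t \<le> (1 - t) powr (-1/s)"
proof (cases "t = 1")
  case True then show ?thesis by (simp add: fs_def)
next
  case False
  then have t1: "t < 1" using t by simp
  have "t powr s \<le> t" using tps t s by simp
  then have le: "1 - t \<le> 1 - t powr s" by simp
  have pos: "0 < 1 - t" using t1 by simp
  have "(1 - t) powr (1/s) \<le> (1 - t powr s) powr (1/s)"
    using le pos s by (intro powr_mono2) auto
  moreover have "0 < (1 - t) powr (1/s)" using pos by simp
  moreover have "0 < (1 - t powr s) powr (1/s)" using pos le by simp
  ultimately have "1 / (1 - t powr s) powr (1/s) \<le> 1 / (1 - t) powr (1/s)"
    by (intro divide_left_mono mult_pos_pos) auto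
  also have "\<dots> = (1 - t) powr (-1/s)"
    using pos by (simp add: powr_minus_divide divide_inverse powr_minus)
  finally show ?thesis unfolding fs_def using le pos by (auto)
qed

lemma fs_ge1: assumes s: "1 < s" and t: "0 \<le> t" "t < 1"
  shows "1 \<le> fs s t"
proof -
  have "0 \<le> t powr s" by simp
  have "t powr s < 1" using t s tps[of t s] by simp
  then have "0 < 1 - t powr s" "1 - t powr s \<le> 1" by auto
  then have "(1 - t powr s) powr (1/s) \<le> 1" "0 < (1 - t powr s) powr (1/s)"
    using s by (auto intro!: powr_le1)
  then show ?thesis unfolding fs_def by simp
qed

lemma fs_integrable: assumes s: "1 < s" shows "fs s integrable_on {0..1}"
proof (rule measurable_bounded_by_integrable_imp_integrable)
  show "fs s \<in> borel_measurable (lebesgue_on {0..1})" by (rule borel_leb_on[OF fs_borel])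
  have "-1/s > -1" using s by (simp add: field_simps)
  then show "(\<lambda>t. (1 - t) powr (-1/s)) integrable_on {0..1}"
    using powr_refl_int by blast
  show "norm (fs s x) \<le> (1 - x) powr (-1/s)" if "x \<in> {0..1}" for x
    using fs_bound[OF s, of x] that by auto
qed auto


lemma abs_int_lborel:
  fixes f :: "real \<Rightarrow> real"
  assumes "f absolutely_integrable_on S" "S \<in> sets borel" "f \<in> borel_measurable borel"
  shows "set_integrable lborel S f"
proof -
  have m: "(\<lambda>x. indicator S x *\<^sub>R f x) \<in> borel_measurable lborel" using assms(2,3) by measurable
  show ?thesis using assms(1) unfolding set_integrable_def
    using integrable_completion[OF m] by simp
qed

definition Fs :: "real \<Rightarrow> real \<Rightarrow> real" where "Fs s y = integral {0..y} (fs s)"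
definition Ps :: "real \<Rightarrow> real" where "Ps s = integral {0..1} (fs s)"

lemma pi_s_Ps: assumes s: "1 < s" shows "pi_s s = 2 * Ps s"
proof -
  have ai: "fs s absolutely_integrable_on {0..1}"
    using fs_integrable[OF s] fs_bound[OF s] by (subst absolutely_integrable_on_iff_nonneg) auto
  have si: "set_integrable lborel {0..1} (fs s)"
    by (rule abs_int_lborel[OF ai _ fs_borel]) auto
  have "(LBINT t=0..1. 1 / (1 - t powr s) powr (1/s)) = (LBINT t=0..1. fs s t)"
    by (simp add: fs_def)
  also have "\<dots> = integral {0..1} (fs s)"
    using interval_integral_eq_integral[OF _ si] by (simp add: zero_ereal_def one_ereal_def)
  finally show ?thesis unfolding pi_s_def Ps_def by simp
qed

lemma fs_cont: assumes s: "1 < s" and y: "0 < y" "y < 1" shows "isCont (fs s) y"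
proof -
  have "y powr s < 1" using tps[of y s] y s by simp
  then show ?thesis unfolding fs_def
    using y by (intro continuous_intros) auto
qed

lemma Fs_deriv: assumes s: "1 < s" and y: "0 < y" "y < 1"
  shows "(Fs s has_real_derivative fs s y) (at y)"
proof -
  have "((\<lambda>u. integral {0..u} (fs s)) has_vector_derivative fs s y) (at y within ({0..1} - {}))"
    apply (rule integral_has_vector_derivative_continuous_at[OF fs_integrable[OF s]])
    using y fs_cont[OF s, of y] by (auto intro: continuous_at_imp_continuous_at_within)
  then have "((\<lambda>u. integral {0..u} (fs s)) has_vector_derivative fs s y) (at y)"
    using y at_within_interior[of y "{0..1}"] by auto
  then show ?thesis unfolding Fs_def by (simp add: has_real_derivative_iff_has_vector_derivative)
qed

lemma Fs_cont: assumes s: "1 < s" shows "continuous_on {0..1} (Fs s)"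
  unfolding Fs_def by (rule indefinite_integral_continuous_1[OF fs_integrable[OF s]])

lemma Fs_strict: assumes s: "1 < s" and xy: "0 \<le> x" "x < y" "y \<le> 1"
  shows "Fs s x < Fs s y"
proof (rule DERIV_pos_imp_increasing_open[OF xy(2)])
  fix t assume "x < t" "t < y"
  then show "\<exists>d. (Fs s has_real_derivative d) (at t) \<and> 0 < d"
    using Fs_deriv[OF s, of t] fs_ge1[OF s, of t] xy by force
next
  show "continuous_on {x..y} (Fs s)"
    using xy by (intro continuous_on_subset[OF Fs_cont[OF s]]) auto
qed

lemma Fs_0: "Fs s 0 = 0" by (simp add: Fs_def)
lemma Fs_1: "Fs s 1 = Ps s" by (simp add: Fs_def Ps_def)

lemma Ps_pos: assumes s: "1 < s" shows "0 < Ps s"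
  using Fs_strict[OF s, of 0 1] Fs_0 Fs_1 by simp

lemma Fs_inj: assumes s: "1 < s" shows "inj_on (Fs s) {0..1}"
proof (rule inj_onI)
  fix x y assume "x \<in> {0..1}" "y \<in> {0..1}" "Fs s x = Fs s y"
  then show "x = y" using Fs_strict[OF s, of x y] Fs_strict[OF s, of y x]
    by (cases x y rule: linorder_cases) auto
qed

lemma Fs_image: assumes s: "1 < s" shows "Fs s ` {0..1} = {0..Ps s}"
proof
  show "Fs s ` {0..1} \<subseteq> {0..Ps s}"
  proof
    fix z assume "z \<in> Fs s ` {0..1}"
    then obtain y where y: "y \<in> {0..1}" "z = Fs s y" by auto
    have "Fs s 0 \<le> Fs s y" using Fs_strict[OF s, of 0 y] y by (cases "y = 0") auto
    moreover have "Fs s y \<le> Fs s 1" using Fs_strict[OF s, of y 1] y by (cases "y = 1") auto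
    ultimately show "z \<in> {0..Ps s}" using y Fs_0 Fs_1 by auto
  qed
next
  show "{0..Ps s} \<subseteq> Fs s ` {0..1}"
  proof
    fix z assume "z \<in> {0..Ps s}"
    then obtain y where "0 \<le> y" "y \<le> 1" "Fs s y = z"
      using IVT'[of "Fs s" 0 z 1] Fs_cont[OF s] Fs_0 Fs_1 by auto
    then show "z \<in> Fs s ` {0..1}" by auto
  qed
qed

definition Gi :: "real \<Rightarrow> real \<Rightarrow> real" where "Gi s = the_inv_into {0..1} (Fs s)"
definition Gc :: "real \<Rightarrow> real \<Rightarrow> real" where "Gc s z = Gi s (max 0 (min (Ps s) z))"

lemma Gi_cont: assumes s: "1 < s" shows "continuous_on {0..Ps s} (Gi s)"
  using continuous_on_inv_into[OF Fs_cont[OF s] _ Fs_inj[OF s]] Fs_image[OF s]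
  unfolding Gi_def by auto

lemma Gi_props: assumes s: "1 < s" and z: "z \<in> {0..Ps s}"
  shows "Gi s z \<in> {0..1}" "Fs s (Gi s z) = z"
proof -
  have zi: "z \<in> Fs s ` {0..1}" using z Fs_image[OF s] by simp
  show "Gi s z \<in> {0..1}" unfolding Gi_def
    by (rule the_inv_into_into[OF Fs_inj[OF s] zi]) simp
  show "Fs s (Gi s z) = z" unfolding Gi_def
    by (rule f_the_inv_into_f[OF Fs_inj[OF s] zi])
qed

lemma Gc_cont: assumes s: "1 < s" shows "continuous_on UNIV (Gc s)"
proof -
  have "continuous_on UNIV (\<lambda>z. max 0 (min (Ps s) z))" by (intro continuous_intros)
  moreover have "(\<lambda>z. max 0 (min (Ps s) z)) ` UNIV \<subseteq> {0..Ps s}" using Ps_pos[OF s] by auto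
  ultimately show ?thesis unfolding Gc_def
    using continuous_on_compose2[OF Gi_cont[OF s]] by blast
qed

lemma Gc_range: assumes s: "1 < s" shows "Gc s z \<in> {0..1}"
  unfolding Gc_def using Gi_props(1)[OF s] Ps_pos[OF s] by auto

lemma Gc_inv: assumes s: "1 < s" and z: "z \<in> {0..Ps s}" shows "Fs s (Gc s z) = z"
  unfolding Gc_def using Gi_props(2)[OF s] z by auto

lemma Gc_0: assumes s: "1 < s" shows "Gc s 0 = 0"
proof -
  have "Fs s (Gc s 0) = Fs s 0" using Gc_inv[OF s, of 0] Ps_pos[OF s] Fs_0 by simp
  then show ?thesis using Fs_inj[OF s] Gc_range[OF s, of 0] by (auto dest: inj_onD)
qed

lemma Gc_P: assumes s: "1 < s" shows "Gc s (Ps s) = 1"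
proof -
  have "Fs s (Gc s (Ps s)) = Fs s 1" using Gc_inv[OF s, of "Ps s"] Ps_pos[OF s] Fs_1 by simp
  then show ?thesis using Fs_inj[OF s] Gc_range[OF s, of "Ps s"] by (auto dest: inj_onD)
qed

lemma Gc_open: assumes s: "1 < s" and z: "0 < z" "z < Ps s" shows "0 < Gc s z" "Gc s z < 1"
proof -
  have e: "Fs s (Gc s z) = z" using Gc_inv[OF s, of z] z by simp
  have "Gc s z \<noteq> 0" using e z Fs_0[of s] by auto
  moreover have "Gc s z \<noteq> 1" using e z Fs_1[of s] by auto
  ultimately show "0 < Gc s z" "Gc s z < 1" using Gc_range[OF s, of z] by auto
qed

lemma Gc_deriv: assumes s: "1 < s" and z: "0 < z" "z < Ps s"
  shows "(Gc s has_real_derivative (1 - Gc s z powr s) powr (1/s)) (at z)"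
proof -
  have d: "(Fs s has_real_derivative fs s (Gc s z)) (at (Gc s z))"
    using Fs_deriv[OF s] Gc_open[OF s z] by blast
  have "fs s (Gc s z) \<noteq> 0" using fs_ge1[OF s, of "Gc s z"] Gc_open[OF s z] by simp
  have "(Gc s has_real_derivative inverse (fs s (Gc s z))) (at z)"
  proof (rule DERIV_inverse_function[where f="Fs s" and a=0 and b="Ps s"])
    show "(Fs s has_real_derivative fs s (Gc s z)) (at (Gc s z))" by (rule d)
    show "fs s (Gc s z) \<noteq> 0" by fact
    show "0 < z" "z < Ps s" using z by auto
    show "Fs s (Gc s y) = y" if "0 < y" "y < Ps s" for y using Gc_inv[OF s, of y] that by auto
    show "isCont (Gc s) z" using Gc_cont[OF s] by (simp add: continuous_on_eq_continuous_at)
  qed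
  then show ?thesis by (simp add: fs_def)
qed


definition Hs :: "real \<Rightarrow> real \<Rightarrow> real" where
  "Hs s z = Gc s z * (1 - Gc s z powr s) powr ((s-1)/s)"

lemma Hs_deriv: assumes s: "1 < s" and z: "0 < z" "z < Ps s"
  shows "(Hs s has_real_derivative (1 - s * Gc s z powr s)) (at z)"
proof -
  define G where "G = Gc s z"
  define D where "D = 1 - G powr s"
  define e where "e = (s-1)/s"
  have G: "0 < G" "G < 1" using Gc_open[OF s z] unfolding G_def by auto
  have "G powr s < 1" using G s tps[of G s] by simp
  then have D: "0 < D" unfolding D_def by simp
  have dG: "(Gc s has_real_derivative D powr (1/s)) (at z)"
    using Gc_deriv[OF s z] unfolding D_def G_def .
  have d1: "((\<lambda>x. Gc s x powr s) has_real_derivative (s * G powr (s-1) * D powr (1/s))) (at z)"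
    using DERIV_chain2[OF has_real_derivative_powr[OF G(1)[unfolded G_def], of s] dG] G_def
    by (simp add: mult.assoc)
  have d2: "((\<lambda>x. 1 - Gc s x powr s) has_real_derivative (- (s * G powr (s-1) * D powr (1/s)))) (at z)"
    using DERIV_diff[OF DERIV_const d1] by simp
  have d3: "((\<lambda>x. (1 - Gc s x powr s) powr e) has_real_derivative
      (e * D powr (e - 1) * (- (s * G powr (s-1) * D powr (1/s))))) (at z)"
    using DERIV_chain2[OF has_real_derivative_powr[OF D[unfolded D_def G_def], of e] d2[unfolded G_def]] G_def D_def
    by simp
  have d4: "(Hs s has_real_derivative
      (D powr (1/s) * D powr e + G * (e * D powr (e - 1) * (- (s * G powr (s-1) * D powr (1/s)))))) (at z)"
  proof -
    have "((\<lambda>x. Gc s x * (1 - Gc s x powr s) powr e) has_real_derivative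
      D powr (1/s) * (1 - Gc s z powr s) powr e + (e * D powr (e - 1) * (- (s * G powr (s-1) * D powr (1/s)))) * Gc s z) (at z)"
      by (rule DERIV_mult[OF dG d3])
    moreover have "Hs s = (\<lambda>x. Gc s x * (1 - Gc s x powr s) powr e)"
      unfolding Hs_def e_def by simp
    ultimately show ?thesis unfolding D_def[symmetric] G_def[symmetric] by (simp add: mult.commute)
  qed
  have "D powr (1/s) * D powr e = D"
    using D s by (simp add: e_def flip: powr_add) (simp add: field_simps)
  moreover have "G * (e * D powr (e - 1) * (- (s * G powr (s-1) * D powr (1/s)))) = - (s-1) * G powr s"
  proof -
    have "D powr (e - 1) * D powr (1/s) = 1"
      using D s by (simp add: e_def flip: powr_add) (simp add: field_simps)
    moreover have "G * G powr (s-1) = G powr s"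
      using G by (simp add: powr_mult_base)
    moreover have "e * s = s - 1" using s by (simp add: e_def)
    ultimately show ?thesis
      by (metis (no_types, lifting) ab_semigroup_mult_class.mult_ac(1) minus_mult_right mult.commute mult.left_commute mult_1_right)
  qed
  ultimately have "(Hs s has_real_derivative D + (1 - s) * G powr s) (at z)" using d4 by simp
  moreover have "D + (1 - s) * G powr s = D - (s-1) * G powr s" by (simp add: algebra_simps)
  ultimately have "(Hs s has_real_derivative D - (s-1) * G powr s) (at z)" by simp
  then show ?thesis unfolding D_def G_def by (simp add: algebra_simps)
qed

lemma Hs_0: assumes s: "1 < s" shows "Hs s 0 = 0" by (simp add: Hs_def Gc_0[OF s])
lemma Hs_P: assumes s: "1 < s" shows "Hs s (Ps s) = 0" by (simp add: Hs_def Gc_P[OF s])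
lemma Hs_cont: assumes s: "1 < s" shows "continuous_on UNIV (Hs s)"
proof -
  have "continuous_on UNIV (\<lambda>z. (1 - Gc s z powr s) powr ((s-1)/s))"
  proof (rule continuous_on_powr')
    show "continuous_on UNIV (\<lambda>z. 1 - Gc s z powr s)"
      using Gc_cont[OF s] Gc_range[OF s] s by (intro continuous_intros continuous_on_powr') auto
  qed (use Gc_range[OF s] s in \<open>auto intro: powr_le1\<close>)
  then show ?thesis unfolding Hs_def by (rule continuous_on_mult[OF Gc_cont[OF s]])
qed



lemma piece_left:
  fixes \<Phi> D :: "real \<Rightarrow> real"
  assumes k: "0 < k" and km: "k * (m - a) = P"
    and cont: "continuous_on UNIV \<Phi>"
    and der: "\<And>z. 0 < z \<Longrightarrow> z < P \<Longrightarrow> (\<Phi> has_real_derivative D z) (at z)"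
    and x: "a \<le> x" "x \<le> m"
  shows "((\<lambda>t. k * D (k * (t - a))) has_integral (\<Phi> (k * (x - a)) - \<Phi> 0)) {a..x}"
proof -
  have "((\<lambda>t. k * D (k * (t - a))) has_integral (\<Phi> (k * (x - a)) - \<Phi> (k * (a - a)))) {a..x}"
  proof (rule fundamental_theorem_of_calculus_interior[OF x(1)])
    show "continuous_on {a..x} (\<lambda>t. \<Phi> (k * (t - a)))"
      by (rule continuous_on_compose2[OF cont]) (auto intro!: continuous_intros)
    show "((\<lambda>t. \<Phi> (k * (t - a))) has_vector_derivative k * D (k * (t - a))) (at t)"
    if t: "t \<in> {a<..<x}" for t
    proof -
      have z: "0 < k * (t - a)" "k * (t - a) < P"
        using t k x km by (auto intro: mult_strict_left_mono simp flip: km)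
      have "((\<lambda>t. k * (t - a)) has_real_derivative k) (at t)"
        by (auto intro!: derivative_eq_intros)
      from DERIV_chain2[OF der[OF z] this]
      show "((\<lambda>t. \<Phi> (k * (t - a))) has_vector_derivative k * D (k * (t - a))) (at t)"
        by (simp add: has_real_derivative_iff_has_vector_derivative mult.commute)
    qed
  qed
  then show ?thesis by simp
qed

lemma piece_right:
  fixes \<Phi> D :: "real \<Rightarrow> real"
  assumes k: "0 < k" and km: "k * (b - m) = P"
    and cont: "continuous_on UNIV \<Phi>"
    and der: "\<And>z. 0 < z \<Longrightarrow> z < P \<Longrightarrow> (\<Phi> has_real_derivative D z) (at z)"
    and x: "m \<le> x" "x \<le> b"
  shows "((\<lambda>t. - k * D (k * (b - t))) has_integral (\<Phi> (k * (b - x)) - \<Phi> P)) {m..x}"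
proof -
  have "((\<lambda>t. - k * D (k * (b - t))) has_integral (\<Phi> (k * (b - x)) - \<Phi> (k * (b - m)))) {m..x}"
  proof (rule fundamental_theorem_of_calculus_interior[OF x(1)])
    show "continuous_on {m..x} (\<lambda>t. \<Phi> (k * (b - t)))"
      by (rule continuous_on_compose2[OF cont]) (auto intro!: continuous_intros)
    show "((\<lambda>t. \<Phi> (k * (b - t))) has_vector_derivative - k * D (k * (b - t))) (at t)"
    if t: "t \<in> {m<..<x}" for t
    proof -
      have z: "0 < k * (b - t)" "k * (b - t) < P"
        using t k x km by (auto intro: mult_strict_left_mono simp flip: km)
      have "((\<lambda>t. k * (b - t)) has_real_derivative - k) (at t)"
        by (auto intro!: derivative_eq_intros)
      from DERIV_chain2[OF der[OF z] this]
      show "((\<lambda>t. \<Phi> (k * (b - t))) has_vector_derivative - k * D (k * (b - t))) (at t)"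
        by (simp add: has_real_derivative_iff_has_vector_derivative mult.commute)
    qed
  qed
  then show ?thesis using km by simp
qed


definition kk :: "real \<Rightarrow> real \<Rightarrow> real \<Rightarrow> real" where "kk s a b = 2 * Ps s / (b - a)"
definition mm :: "real \<Rightarrow> real \<Rightarrow> real" where "mm a b = (a + b) / 2"
definition ww :: "real \<Rightarrow> real \<Rightarrow> real \<Rightarrow> real \<Rightarrow> real" where
  "ww s a b x = Gc s (Ps s - kk s a b * \<bar>x - mm a b\<bar>)"
definition gw :: "real \<Rightarrow> real \<Rightarrow> real \<Rightarrow> real \<Rightarrow> real" where
  "gw s a b x = (if x \<le> mm a b then kk s a b else - kk s a b) * (1 - ww s a b x powr s) powr (1/s)"

context
  fixes s a b :: real
  assumes s: "1 < s" and ab: "a < b"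
begin

lemma kk_pos: "0 < kk s a b" using Ps_pos[OF s] ab by (simp add: kk_def)
lemma kk_left: "kk s a b * (mm a b - a) = Ps s" using ab by (simp add: kk_def mm_def field_simps)
lemma kk_right: "kk s a b * (b - mm a b) = Ps s" using ab by (simp add: kk_def mm_def field_simps)

lemma ww_left: "x \<le> mm a b \<Longrightarrow> ww s a b x = Gc s (kk s a b * (x - a))"
  unfolding ww_def using kk_left by (simp add: abs_if algebra_simps)
lemma ww_right: "mm a b \<le> x \<Longrightarrow> ww s a b x = Gc s (kk s a b * (b - x))"
  unfolding ww_def using kk_right by (simp add: abs_if algebra_simps)

lemma ww_cont: "continuous_on UNIV (ww s a b)"
  unfolding ww_def by (rule continuous_on_compose2[OF Gc_cont[OF s]]) (auto intro!: continuous_intros)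

lemma ww_range: "0 \<le> ww s a b x" "ww s a b x \<le> 1"
  using Gc_range[OF s] unfolding ww_def by auto

lemma ww_m: "ww s a b (mm a b) = 1" unfolding ww_def using Gc_P[OF s] by simp
lemma ww_b: "ww s a b b = 0" using ww_right[of b] ab Gc_0[OF s] by (simp add: mm_def)
lemma ww_a: "ww s a b a = 0" using ww_left[of a] ab Gc_0[OF s] by (simp add: mm_def)

lemma gw_abs_powr: assumes r: "0 < r"
  shows "\<bar>gw s a b x\<bar> powr r = kk s a b powr r * (1 - ww s a b x powr s) powr (r/s)"
proof -
  have nn: "0 \<le> 1 - ww s a b x powr s" using ww_range[of x] s by (auto intro: powr_le1)
  have "\<bar>gw s a b x\<bar> = kk s a b * (1 - ww s a b x powr s) powr (1/s)"
    unfolding gw_def using kk_pos by (auto simp: abs_mult)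
  then show ?thesis using nn kk_pos s by (simp add: powr_mult powr_powr)
qed

lemma ww_borel: "ww s a b \<in> borel_measurable borel"
  using ww_cont by (simp add: borel_measurable_continuous_onI)

lemma gw_borel: "gw s a b \<in> borel_measurable borel"
  unfolding gw_def using ww_borel by measurable


lemma gw_eq_left: "t \<le> mm a b \<Longrightarrow> gw s a b t = kk s a b * (1 - Gc s (kk s a b * (t - a)) powr s) powr (1/s)"
  unfolding gw_def using ww_left by simp

lemma gw_eq_right: "mm a b \<le> t \<Longrightarrow> gw s a b t = - kk s a b * (1 - Gc s (kk s a b * (b - t)) powr s) powr (1/s)"
proof (cases "t = mm a b")
  case True
  have "kk s a b * (b - t) = Ps s" using True kk_right by simp
  then show ?thesis using True unfolding gw_def using ww_m Gc_P[OF s] by simp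
next
  case False
  assume "mm a b \<le> t"
  with False show ?thesis unfolding gw_def using ww_right by simp
qed

lemma Gc_deriv': "\<And>z. 0 < z \<Longrightarrow> z < Ps s \<Longrightarrow> (Gc s has_real_derivative (1 - Gc s z powr s) powr (1/s)) (at z)"
  using Gc_deriv[OF s] by blast

lemma gw_has_integral: assumes x: "a \<le> x" "x \<le> b"
  shows "(gw s a b has_integral ww s a b x) {a..x}"
proof (cases "x \<le> mm a b")
  case True
  have "((\<lambda>t. kk s a b * (1 - Gc s (kk s a b * (t - a)) powr s) powr (1/s)) has_integral
      (Gc s (kk s a b * (x - a)) - Gc s 0)) {a..x}"
    by (rule piece_left[OF kk_pos kk_left Gc_cont[OF s] Gc_deriv' x(1) True])
  then have "(gw s a b has_integral (Gc s (kk s a b * (x - a)) - Gc s 0)) {a..x}"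
    by (rule has_integral_eq[rotated]) (use True in \<open>simp add: gw_eq_left\<close>)
  then show ?thesis using ww_left[OF True] Gc_0[OF s] by simp
next
  case False
  have am: "a \<le> mm a b" using ab by (simp add: mm_def)
  have "((\<lambda>t. kk s a b * (1 - Gc s (kk s a b * (t - a)) powr s) powr (1/s)) has_integral
      (Gc s (kk s a b * (mm a b - a)) - Gc s 0)) {a..mm a b}"
    by (rule piece_left[OF kk_pos kk_left Gc_cont[OF s] Gc_deriv' am order_refl])
  then have i1: "(gw s a b has_integral 1) {a..mm a b}"
    using kk_left Gc_0[OF s] Gc_P[OF s]
    by (subst has_integral_eq[rotated]; simp add: gw_eq_left)
  have "((\<lambda>t. - kk s a b * (1 - Gc s (kk s a b * (b - t)) powr s) powr (1/s)) has_integral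
      (Gc s (kk s a b * (b - x)) - Gc s (Ps s))) {mm a b..x}"
    by (rule piece_right[OF kk_pos kk_right Gc_cont[OF s] Gc_deriv']) (use False x in auto)
  then have i2: "(gw s a b has_integral (ww s a b x - 1)) {mm a b..x}"
    using Gc_P[OF s] ww_right[of x] False
    by (subst has_integral_eq[rotated]; simp add: gw_eq_right)
  show ?thesis using has_integral_combine[OF am _ i1 i2] False by simp
qed


lemma Hs_deriv': "\<And>z. 0 < z \<Longrightarrow> z < Ps s \<Longrightarrow> (Hs s has_real_derivative (1 - s * Gc s z powr s)) (at z)"
  using Hs_deriv[OF s] by blast

lemma ww_powr_int: "((\<lambda>t. ww s a b t powr s) has_integral (b - a) / s) {a..b}"
proof -
  have am: "a \<le> mm a b" "mm a b \<le> b" using ab by (auto simp: mm_def)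
  have "((\<lambda>t. kk s a b * (1 - s * Gc s (kk s a b * (t - a)) powr s)) has_integral
      (Hs s (kk s a b * (mm a b - a)) - Hs s 0)) {a..mm a b}"
    by (rule piece_left[OF kk_pos kk_left Hs_cont[OF s] Hs_deriv' am(1) order_refl])
  then have i1: "((\<lambda>t. kk s a b * (1 - s * ww s a b t powr s)) has_integral 0) {a..mm a b}"
    using kk_left Hs_0[OF s] Hs_P[OF s]
    by (subst has_integral_eq[rotated]; simp add: ww_left)
  have "((\<lambda>t. - kk s a b * (1 - s * Gc s (kk s a b * (b - t)) powr s)) has_integral
      (Hs s (kk s a b * (b - b)) - Hs s (Ps s))) {mm a b..b}"
    by (rule piece_right[OF kk_pos kk_right Hs_cont[OF s] Hs_deriv' am(2) order_refl])
  then have "((\<lambda>t. - kk s a b * (1 - s * ww s a b t powr s)) has_integral 0) {mm a b..b}"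
    using Hs_0[OF s] Hs_P[OF s]
    by (subst has_integral_eq[rotated]; simp add: ww_right)
  from has_integral_neg[OF this]
  have i2: "((\<lambda>t. kk s a b * (1 - s * ww s a b t powr s)) has_integral 0) {mm a b..b}" by simp
  have "((\<lambda>t. kk s a b * (1 - s * ww s a b t powr s)) has_integral 0) {a..b}"
    using has_integral_combine[OF am i1 i2] by simp
  from has_integral_cmul[OF this, of "1 / kk s a b"]
  have i3: "((\<lambda>t. 1 - s * ww s a b t powr s) has_integral 0) {a..b}" using kk_pos by simp
  have cw: "continuous_on {a..b} (\<lambda>t. ww s a b t powr s)"
    using ww_cont ww_range s by (intro continuous_on_powr' continuous_intros) (auto intro: continuous_on_subset)
  then have "(\<lambda>t. ww s a b t powr s) integrable_on {a..b}" by (rule integrable_continuous_real)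
  then obtain I where I: "((\<lambda>t. ww s a b t powr s) has_integral I) {a..b}" by blast
  have "((\<lambda>t. 1 - s * ww s a b t powr s) has_integral ((b - a) - s * I)) {a..b}"
    using has_integral_diff[OF has_integral_const_real[of 1 a b] has_integral_cmul[OF I, of s]] ab by simp
  then have "(b - a) - s * I = 0" using i3 has_integral_unique by blast
  then have "I = (b - a) / s" using s by (simp add: field_simps)
  then show ?thesis using I by simp
qed


lemma ww_pow_cont: "continuous_on S (\<lambda>t. ww s a b t powr s)"
  by (rule continuous_on_powr'[OF continuous_on_subset[OF ww_cont]]) (use ww_range s in auto)

lemma ww_pow_cont2: assumes e: "0 < e" shows "continuous_on S (\<lambda>t. c * (1 - ww s a b t powr s) powr e)"
proof (rule continuous_on_mult[OF continuous_on_const])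
  show "continuous_on S (\<lambda>t. (1 - ww s a b t powr s) powr e)"
    by (rule continuous_on_powr'[OF continuous_on_diff[OF continuous_on_const ww_pow_cont]])
       (use ww_range s e in \<open>auto intro: powr_le1\<close>)
qed

lemma W10_ww: assumes r: "0 < r" shows "W10 r a b (ww s a b) (gw s a b)"
proof -
  have gb: "gw s a b \<in> borel_measurable lborel" using gw_borel by simp
  have c1: "continuous_on {a..b} (\<lambda>t. kk s a b powr r * (1 - ww s a b t powr s) powr (r/s))"
    using r s by (intro ww_pow_cont2) auto
  have i1: "set_integrable lborel {a..b} (\<lambda>t. \<bar>gw s a b t\<bar> powr r)"
    using borel_integrable_atLeastAtMost'[OF c1] by (simp add: gw_abs_powr[OF r])
  have c2: "continuous_on {a..b} (\<lambda>t. kk s a b powr 1 * (1 - ww s a b t powr s) powr (1/s))"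
    using s by (intro ww_pow_cont2) auto
  have "set_integrable lborel {a..b} (\<lambda>t. \<bar>gw s a b t\<bar> powr 1)"
    using borel_integrable_atLeastAtMost'[OF c2] by (simp only: gw_abs_powr[of 1])
  then have "set_integrable lborel {a..b} (\<lambda>t. \<bar>gw s a b t\<bar>)" by simp
  then have i2: "set_integrable lborel {a..b} (gw s a b)"
    using set_integrable_abs_iff'[OF gb] by simp
  have eq: "ww s a b x = (LINT t:{a..x}|lborel. gw s a b t)" if x: "x \<in> {a..b}" for x
  proof -
    have "set_integrable lborel {a..x} (gw s a b)"
      by (rule set_integrable_subset[OF i2]) (use x in auto)
    then have "(LINT t:{a..x}|lborel. gw s a b t) = integral {a..x} (gw s a b)"
      by (rule set_borel_integral_eq_integral(2))
    also have "\<dots> = ww s a b x" using gw_has_integral x by (auto intro: integral_unique)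
    finally show ?thesis by simp
  qed
  show ?thesis unfolding W10_def using i1 i2 eq ww_b by blast
qed

lemma set_int_nonneg:
  fixes f :: "real \<Rightarrow> real"
  assumes "\<And>x. x \<in> A \<Longrightarrow> 0 \<le> f x" shows "0 \<le> (LINT x:A|lborel. f x)"
  unfolding set_lebesgue_integral_def
  by (rule Bochner_Integration.integral_nonneg) (use assms in \<open>auto simp: indicator_def\<close>)

lemma ww_int_s: "(LINT t:{a..b}|lborel. \<bar>ww s a b t\<bar> powr s) = (b - a) / s"
proof -
  have "continuous_on {a..b} (\<lambda>t. \<bar>ww s a b t\<bar> powr s)"
    using ww_pow_cont ww_range by simp
  then have "(LINT t:{a..b}|lborel. \<bar>ww s a b t\<bar> powr s) = integral {a..b} (\<lambda>t. \<bar>ww s a b t\<bar> powr s)"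
    by (intro set_borel_integral_eq_integral(2) borel_integrable_atLeastAtMost')
  also have "\<dots> = integral {a..b} (\<lambda>t. ww s a b t powr s)"
    using ww_range by simp
  also have "\<dots> = (b - a) / s" using ww_powr_int by (rule integral_unique)
  finally show ?thesis .
qed

lemma gw_int_s: "(LINT t:{a..b}|lborel. \<bar>gw s a b t\<bar> powr s) = kk s a b powr s * ((b - a) - (b - a) / s)"
proof -
  have c: "continuous_on {a..b} (\<lambda>t. kk s a b powr s * (1 - ww s a b t powr s) powr (s/s))"
    using s by (intro ww_pow_cont2) auto
  have "(LINT t:{a..b}|lborel. \<bar>gw s a b t\<bar> powr s) =
      (LINT t:{a..b}|lborel. kk s a b powr s * (1 - ww s a b t powr s) powr (s/s))"
    using gw_abs_powr[of s] s by simp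
  also have "\<dots> = integral {a..b} (\<lambda>t. kk s a b powr s * (1 - ww s a b t powr s) powr (s/s))"
    by (intro set_borel_integral_eq_integral(2) borel_integrable_atLeastAtMost' c)
  also have "\<dots> = integral {a..b} (\<lambda>t. kk s a b powr s * (1 - ww s a b t powr s))"
  proof -
    have "(1 - ww s a b t powr s) powr (s/s) = 1 - ww s a b t powr s" for t
    proof -
      have "0 \<le> 1 - ww s a b t powr s" using ww_range[of t] s by (auto intro: powr_le1)
      then show ?thesis using s by (cases "1 - ww s a b t powr s = 0") auto
    qed
    then show ?thesis by simp
  qed
  also have "\<dots> = kk s a b powr s * ((b - a) - (b - a) / s)"
  proof -
    have "((\<lambda>t. 1 - ww s a b t powr s) has_integral ((b - a) - (b - a) / s)) {a..b}"
      using has_integral_diff[OF has_integral_const_real[of 1 a b] ww_powr_int] ab by simp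
    from has_integral_cmul[OF this, of "kk s a b powr s"]
    have "((\<lambda>t. kk s a b powr s * (1 - ww s a b t powr s)) has_integral kk s a b powr s * ((b - a) - (b - a) / s)) {a..b}"
      by simp
    then show ?thesis by (rule integral_unique)
  qed
  finally show ?thesis .
qed

lemma Lambda1_le: "Lambda1 s a b \<le> kk s a b powr s * (s - 1)"
proof -
  let ?X = "{(LINT t:{a..b}|lborel. \<bar>g t\<bar> powr s) / (LINT t:{a..b}|lborel. \<bar>u t\<bar> powr s)
      | u g. W10 s a b u g \<and> (\<exists>x\<in>{a..b}. u x \<noteq> 0)}"
  have mem: "kk s a b powr s * ((b - a) - (b - a) / s) / ((b - a) / s) \<in> ?X"
  proof -
    have "mm a b \<in> {a..b}" using ab by (auto simp: mm_def)
    then have "\<exists>x\<in>{a..b}. ww s a b x \<noteq> 0" using ww_m by force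
    then show ?thesis using W10_ww[of s] s gw_int_s ww_int_s by force
  qed
  have bdd: "bdd_below ?X"
    by (rule bdd_belowI[of _ 0]) (auto intro!: divide_nonneg_nonneg set_int_nonneg)
  have "Lambda1 s a b \<le> kk s a b powr s * ((b - a) - (b - a) / s) / ((b - a) / s)"
    unfolding Lambda1_def by (rule cInf_lower[OF mem bdd])
  also have "\<dots> = kk s a b powr s * (s - 1)" using ab s by (simp add: field_simps)
  finally show ?thesis .
qed

end


lemma W10_int:
  assumes "W10 p a b u g"
  shows "g integrable_on {a..b}" "(\<lambda>t. \<bar>g t\<bar>) integrable_on {a..b}"
    "(\<lambda>t. \<bar>g t\<bar> powr p) integrable_on {a..b}"
    "(LINT t:{a..b}|lborel. \<bar>g t\<bar> powr p) = integral {a..b} (\<lambda>t. \<bar>g t\<bar> powr p)"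
    "\<And>x. x \<in> {a..b} \<Longrightarrow> u x = integral {a..x} g"
    "u b = 0"
proof -
  have si: "set_integrable lborel {a..b} g" and sp: "set_integrable lborel {a..b} (\<lambda>t. \<bar>g t\<bar> powr p)"
    and ux: "\<forall>x\<in>{a..b}. u x = (LINT t:{a..x}|lborel. g t)" and ub: "u b = 0"
    using assms unfolding W10_def by auto
  show "g integrable_on {a..b}" by (rule set_borel_integral_eq_integral(1)[OF si])
  show "(\<lambda>t. \<bar>g t\<bar>) integrable_on {a..b}" by (rule set_borel_integral_eq_integral(1)[OF set_integrable_abs[OF si]])
  show "(\<lambda>t. \<bar>g t\<bar> powr p) integrable_on {a..b}" by (rule set_borel_integral_eq_integral(1)[OF sp])
  show "(LINT t:{a..b}|lborel. \<bar>g t\<bar> powr p) = integral {a..b} (\<lambda>t. \<bar>g t\<bar> powr p)"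
    by (rule set_borel_integral_eq_integral(2)[OF sp])
  show "u b = 0" by (rule ub)
  fix x assume x: "x \<in> {a..b}"
  have "set_integrable lborel {a..x} g" by (rule set_integrable_subset[OF si]) (use x in auto)
  then show "u x = integral {a..x} g" using ux x set_borel_integral_eq_integral(2) by metis
qed

lemma W10_sup:
  assumes w: "W10 p a b u g" and x: "x \<in> {a..b}"
  shows "2 * \<bar>u x\<bar> \<le> integral {a..b} (\<lambda>t. \<bar>g t\<bar>)"
proof -
  note I = W10_int[OF w]
  have ab: "a \<le> b" using x by simp
  have b: "b \<in> {a..b}" using ab by simp
  have gi1: "g integrable_on {a..x}" "g integrable_on {x..b}"
    using I(1) x by (auto intro: integrable_on_subinterval)
  have ai1: "(\<lambda>t. \<bar>g t\<bar>) integrable_on {a..x}" "(\<lambda>t. \<bar>g t\<bar>) integrable_on {x..b}"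
    using I(2) x by (auto intro: integrable_on_subinterval)
  have c1: "integral {a..x} g + integral {x..b} g = integral {a..b} g"
    using Henstock_Kurzweil_Integration.integral_combine[OF _ _ I(1)] x by auto
  have c2: "integral {a..x} (\<lambda>t. \<bar>g t\<bar>) + integral {x..b} (\<lambda>t. \<bar>g t\<bar>) = integral {a..b} (\<lambda>t. \<bar>g t\<bar>)"
    using Henstock_Kurzweil_Integration.integral_combine[OF _ _ I(2)] x by auto
  have "integral {a..b} g = 0" using I(5)[OF b] I(6) ab by simp
  have n1: "\<bar>integral {a..x} g\<bar> \<le> integral {a..x} (\<lambda>t. \<bar>g t\<bar>)"
    using integral_norm_bound_integral[OF gi1(1) ai1(1)] by simp
  have n2: "\<bar>integral {x..b} g\<bar> \<le> integral {x..b} (\<lambda>t. \<bar>g t\<bar>)"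
    using integral_norm_bound_integral[OF gi1(2) ai1(2)] by simp
  have "u x = integral {a..x} g" using I(5)[OF x] .
  then show ?thesis using c1 c2 n1 n2 \<open>integral {a..b} g = 0\<close> by linarith
qed


lemma holder_pt:
  fixes p A L x :: real
  assumes p: "1 < p" and A: "0 < A" and L: "0 < L" and x: "0 \<le> x"
  shows "x / (A powr (1/p) * L powr (1 - 1/p)) \<le> (1/p) * (x powr p / A) + (1 - 1/p) * (1 / L)"
proof (cases "x = 0")
  case True then show ?thesis using p A L by simp
next
  case False
  then have x0: "0 < x" using x by simp
  have "(x powr p / A) powr (1/p) * (1/L) powr (1 - 1/p) \<le> (1/p) * (x powr p / A) + (1 - 1/p) * (1 / L)"
    by (rule Youngs_inequality_0) (use p A L x0 in auto)
  moreover have "(x powr p / A) powr (1/p) * (1/L) powr (1 - 1/p) = x / (A powr (1/p) * L powr (1 - 1/p))"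
    using p A L x0 by (simp add: powr_divide powr_powr)
  ultimately show ?thesis by simp
qed

lemma holder_gen:
  fixes g :: "real \<Rightarrow> real"
  assumes p: "1 < p" and ab: "a < b"
    and i1: "(\<lambda>t. \<bar>g t\<bar>) integrable_on {a..b}" and ip: "(\<lambda>t. \<bar>g t\<bar> powr p) integrable_on {a..b}"
    and A: "integral {a..b} (\<lambda>t. \<bar>g t\<bar> powr p) \<le> A'" "0 < A'"
  shows "integral {a..b} (\<lambda>t. \<bar>g t\<bar>) \<le> A' powr (1/p) * (b - a) powr (1 - 1/p)"
proof -
  define C where "C = A' powr (1/p) * (b - a) powr (1 - 1/p)"
  define L where "L = b - a"
  have C: "0 < C" using A ab by (simp add: C_def)
  have L: "0 < L" using ab by (simp add: L_def)
  have h1: "((\<lambda>t. \<bar>g t\<bar> / C) has_integral integral {a..b} (\<lambda>t. \<bar>g t\<bar>) / C) {a..b}"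
    using has_integral_divide[OF integrable_integral[OF i1], of C] by simp
  have h2: "((\<lambda>t. (1/p) * (\<bar>g t\<bar> powr p / A') + (1 - 1/p) * (1 / L)) has_integral
      (1/p) * (integral {a..b} (\<lambda>t. \<bar>g t\<bar> powr p) / A') + (1 - 1/p) * (1 / L) * L) {a..b}"
  proof -
    have "((\<lambda>t. (1/p) * (\<bar>g t\<bar> powr p / A')) has_integral (1/p) * (integral {a..b} (\<lambda>t. \<bar>g t\<bar> powr p) / A')) {a..b}"
      using has_integral_mult_right[OF has_integral_divide[OF integrable_integral[OF ip], of A'], of "1/p"] by simp
    moreover have "((\<lambda>t. (1 - 1/p) * (1 / L)) has_integral (1 - 1/p) * (1 / L) * L) {a..b}"
      using has_integral_const_real[of "(1 - 1/p) * (1 / L)" a b] ab by (simp add: L_def mult.commute)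
    ultimately show ?thesis by (rule has_integral_add)
  qed
  have "integral {a..b} (\<lambda>t. \<bar>g t\<bar>) / C \<le> (1/p) * (integral {a..b} (\<lambda>t. \<bar>g t\<bar> powr p) / A') + (1 - 1/p) * (1 / L) * L"
    by (rule has_integral_le[OF h1 h2]) (use holder_pt[OF p A(2) L] in \<open>simp add: C_def L_def\<close>)
  also have "\<dots> \<le> 1/p + (1 - 1/p)"
  proof -
    have "integral {a..b} (\<lambda>t. \<bar>g t\<bar> powr p) / A' \<le> 1" using A by simp
    then have "(1/p) * (integral {a..b} (\<lambda>t. \<bar>g t\<bar> powr p) / A') \<le> 1/p"
      by (rule mult_left_le) (use p in auto)
    then show ?thesis using L by simp
  qed
  finally have "integral {a..b} (\<lambda>t. \<bar>g t\<bar>) / C \<le> 1" by simp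
  then show ?thesis using C by (simp add: C_def divide_le_eq)
qed

lemma holder:
  fixes g :: "real \<Rightarrow> real"
  assumes p: "1 < p" and ab: "a < b"
    and i1: "(\<lambda>t. \<bar>g t\<bar>) integrable_on {a..b}" and ip: "(\<lambda>t. \<bar>g t\<bar> powr p) integrable_on {a..b}"
  shows "integral {a..b} (\<lambda>t. \<bar>g t\<bar>) \<le> integral {a..b} (\<lambda>t. \<bar>g t\<bar> powr p) powr (1/p) * (b - a) powr (1 - 1/p)"
proof -
  define A where "A = integral {a..b} (\<lambda>t. \<bar>g t\<bar> powr p)"
  define I where "I = integral {a..b} (\<lambda>t. \<bar>g t\<bar>)"
  define K where "K = (b - a) powr (1 - 1/p)"
  have K: "0 < K" using ab by (simp add: K_def)
  have A0: "0 \<le> A" unfolding A_def by (rule integral_nonneg[OF ip]) simp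
  have I0: "0 \<le> I" unfolding I_def by (rule integral_nonneg[OF i1]) simp
  show ?thesis
  proof (cases "A = 0")
    case False
    then show ?thesis using holder_gen[OF p ab i1 ip, of A] A0 unfolding A_def by simp
  next
    case True
    have "I \<le> 0"
    proof (rule ccontr)
      assume "\<not> I \<le> 0"
      then have Ip: "0 < I" by simp
      define e where "e = (I / (2 * K)) powr p"
      have e: "0 < e" using Ip K by (simp add: e_def)
      have "I \<le> e powr (1/p) * K"
        using holder_gen[OF p ab i1 ip, of e] e True unfolding A_def I_def K_def by simp
      also have "e powr (1/p) = I / (2 * K)" using Ip K p by (simp add: e_def powr_powr)
      finally have "I \<le> I / 2" using K by simp
      then show False using Ip by simp
    qed
    then show ?thesis using I0 True unfolding A_def I_def by simp
  qed
qed


lemma set_int_not_zero: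
  fixes f :: "real \<Rightarrow> real"
  assumes "(LINT x:S|lborel. f x) \<noteq> 0" shows "set_integrable lborel S f"
  using assms unfolding set_lebesgue_integral_def set_integrable_def
  using not_integrable_integral_eq by blast

lemma quot_lower:
  fixes p q \<alpha> \<beta> a b :: real
  assumes p: "1 < p" and q: "1 < q" and al: "\<alpha> > 0" and be: "\<beta> > 0"
    and pq: "\<alpha> / p + \<beta> / q = 1" and ab: "a < b"
    and wu: "W10 p a b u g" and wv: "W10 q a b v h"
    and Dpos: "0 < (LINT t:{a..b}|lborel. \<bar>u t\<bar> powr \<alpha> * \<bar>v t\<bar> powr \<beta>)"
  shows "inverse (\<alpha> powr (\<alpha> / p) * \<beta> powr (\<beta> / q)) * (2 / (b - a)) powr (\<alpha> + \<beta>)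
    \<le> ((1/p) * (LINT t:{a..b}|lborel. \<bar>g t\<bar> powr p) + (1/q) * (LINT t:{a..b}|lborel. \<bar>h t\<bar> powr q))
        / (LINT t:{a..b}|lborel. \<bar>u t\<bar> powr \<alpha> * \<bar>v t\<bar> powr \<beta>)"
proof -
  note Iu = W10_int[OF wu] and Iv = W10_int[OF wv]
  define L where "L = b - a"
  define D where "D = (LINT t:{a..b}|lborel. \<bar>u t\<bar> powr \<alpha> * \<bar>v t\<bar> powr \<beta>)"
  define A where "A = integral {a..b} (\<lambda>t. \<bar>g t\<bar> powr p)"
  define B where "B = integral {a..b} (\<lambda>t. \<bar>h t\<bar> powr q)"
  define Ig where "Ig = integral {a..b} (\<lambda>t. \<bar>g t\<bar>)"
  define Ih where "Ih = integral {a..b} (\<lambda>t. \<bar>h t\<bar>)"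
  have L: "0 < L" using ab by (simp add: L_def)
  have D: "0 < D" using Dpos by (simp add: D_def)
  have A0: "0 \<le> A" unfolding A_def by (rule integral_nonneg[OF Iu(3)]) simp
  have B0: "0 \<le> B" unfolding B_def by (rule integral_nonneg[OF Iv(3)]) simp
  have Ig0: "0 \<le> Ig" unfolding Ig_def by (rule integral_nonneg[OF Iu(2)]) simp
  have Ih0: "0 \<le> Ih" unfolding Ih_def by (rule integral_nonneg[OF Iv(2)]) simp
  have Hg: "Ig \<le> A powr (1/p) * L powr (1 - 1/p)"
    unfolding Ig_def A_def L_def by (rule holder[OF p ab Iu(2) Iu(3)])
  have Hh: "Ih \<le> B powr (1/q) * L powr (1 - 1/q)"
    unfolding Ih_def B_def L_def by (rule holder[OF q ab Iv(2) Iv(3)])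
  have si: "set_integrable lborel {a..b} (\<lambda>t. \<bar>u t\<bar> powr \<alpha> * \<bar>v t\<bar> powr \<beta>)"
    using D by (intro set_int_not_zero) (simp add: D_def)
  have Dint: "D = integral {a..b} (\<lambda>t. \<bar>u t\<bar> powr \<alpha> * \<bar>v t\<bar> powr \<beta>)"
    unfolding D_def by (rule set_borel_integral_eq_integral(2)[OF si])
  have Dle: "D \<le> (Ig / 2) powr \<alpha> * (Ih / 2) powr \<beta> * L"
  proof -
    have pt: "\<bar>u t\<bar> powr \<alpha> * \<bar>v t\<bar> powr \<beta> \<le> (Ig / 2) powr \<alpha> * (Ih / 2) powr \<beta>" if t: "t \<in> {a..b}" for t
    proof -
      have "\<bar>u t\<bar> \<le> Ig / 2" using W10_sup[OF wu t] by (simp add: Ig_def)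
      then have 1: "\<bar>u t\<bar> powr \<alpha> \<le> (Ig / 2) powr \<alpha>" using al by (intro powr_mono2) auto
      have "\<bar>v t\<bar> \<le> Ih / 2" using W10_sup[OF wv t] by (simp add: Ih_def)
      then have 2: "\<bar>v t\<bar> powr \<beta> \<le> (Ih / 2) powr \<beta>" using be by (intro powr_mono2) auto
      show ?thesis by (rule mult_mono[OF 1 2]) auto
    qed
    have "integral {a..b} (\<lambda>t. \<bar>u t\<bar> powr \<alpha> * \<bar>v t\<bar> powr \<beta>) \<le> integral {a..b} (\<lambda>t. (Ig / 2) powr \<alpha> * (Ih / 2) powr \<beta>)"
      by (rule integral_le[OF set_borel_integral_eq_integral(1)[OF si] integrable_const_ivl]) (use pt in auto)
    also have "\<dots> = (Ig / 2) powr \<alpha> * (Ih / 2) powr \<beta> * L" using ab by (simp add: L_def)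
    finally show ?thesis using Dint by simp
  qed
  define M where "M = (A powr (1/p) * L powr (1 - 1/p) / 2) powr \<alpha> * (B powr (1/q) * L powr (1 - 1/q) / 2) powr \<beta> * L"
  have DM: "D \<le> M"
  proof -
    have "(Ig / 2) powr \<alpha> \<le> (A powr (1/p) * L powr (1 - 1/p) / 2) powr \<alpha>"
      using Hg Ig0 al by (intro powr_mono2) auto
    moreover have "(Ih / 2) powr \<beta> \<le> (B powr (1/q) * L powr (1 - 1/q) / 2) powr \<beta>"
      using Hh Ih0 be by (intro powr_mono2) auto
    ultimately have "(Ig / 2) powr \<alpha> * (Ih / 2) powr \<beta> \<le> (A powr (1/p) * L powr (1 - 1/p) / 2) powr \<alpha> * (B powr (1/q) * L powr (1 - 1/q) / 2) powr \<beta>"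
      by (intro mult_mono) auto
    then show ?thesis using Dle L unfolding M_def by (meson order_trans mult_right_mono less_imp_le)
  qed
  have Meq: "M = (L / 2) powr (\<alpha> + \<beta>) * (A powr (\<alpha> / p) * B powr (\<beta> / q))"
  proof -
    have e1: "(A powr (1/p) * L powr (1 - 1/p) / 2) powr \<alpha> = A powr (\<alpha>/p) * L powr (\<alpha> * (1 - 1/p)) / 2 powr \<alpha>"
      using A0 L by (simp add: powr_divide powr_mult powr_powr mult.commute)
    have e2: "(B powr (1/q) * L powr (1 - 1/q) / 2) powr \<beta> = B powr (\<beta>/q) * L powr (\<beta> * (1 - 1/q)) / 2 powr \<beta>"
      using B0 L by (simp add: powr_divide powr_mult powr_powr mult.commute)
    have ex: "\<alpha> * (1 - 1/p) + \<beta> * (1 - 1/q) + 1 = \<alpha> + \<beta>"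
      using pq by (simp add: algebra_simps)
    have "L powr (\<alpha> * (1 - 1/p)) * L powr (\<beta> * (1 - 1/q)) * L = L powr (\<alpha> + \<beta>)"
    proof -
      have "L powr (\<alpha> * (1 - 1/p)) * L powr (\<beta> * (1 - 1/q)) * L powr 1 = L powr (\<alpha> * (1 - 1/p) + \<beta> * (1 - 1/q) + 1)"
        by (simp only: powr_add)
      then show ?thesis using L ex by simp
    qed
    moreover have "(L / 2) powr (\<alpha> + \<beta>) = L powr (\<alpha> + \<beta>) / (2 powr \<alpha> * 2 powr \<beta>)"
      using L by (simp add: powr_divide powr_add)
    ultimately show ?thesis unfolding M_def e1 e2 by (simp add: field_simps)
  qed
  have Y: "0 < A powr (\<alpha> / p) * B powr (\<beta> / q)"
  proof -
    have "0 < M" using D DM by simp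
    then show ?thesis using L unfolding Meq by (simp add: zero_less_mult_iff)
  qed
  then have A: "0 < A" and B: "0 < B" using A0 B0 by (auto simp: zero_less_mult_iff)
  have young: "(A / \<alpha>) powr (\<alpha> / p) * (B / \<beta>) powr (\<beta> / q) \<le> (\<alpha> / p) * (A / \<alpha>) + (\<beta> / q) * (B / \<beta>)"
    by (rule Youngs_inequality_0) (use al be p q pq A B in auto)
  define c where "c = inverse (\<alpha> powr (\<alpha> / p) * \<beta> powr (\<beta> / q))"
  have c: "0 < c" using al be by (simp add: c_def)
  have N: "c * (A powr (\<alpha> / p) * B powr (\<beta> / q)) \<le> (1/p) * A + (1/q) * B"
  proof -
    have "(A / \<alpha>) powr (\<alpha> / p) * (B / \<beta>) powr (\<beta> / q) = c * (A powr (\<alpha> / p) * B powr (\<beta> / q))"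
      using A B al be by (simp add: c_def powr_divide field_simps)
    moreover have "(\<alpha> / p) * (A / \<alpha>) + (\<beta> / q) * (B / \<beta>) = (1/p) * A + (1/q) * B"
      using al be by simp
    ultimately show ?thesis using young by simp
  qed
  have "c * (2 / L) powr (\<alpha> + \<beta>) * D \<le> c * (2 / L) powr (\<alpha> + \<beta>) * M"
    using DM c by (intro mult_left_mono) auto
  also have "\<dots> = c * (A powr (\<alpha> / p) * B powr (\<beta> / q))"
  proof -
    have "(2 / L) powr (\<alpha> + \<beta>) * (L / 2) powr (\<alpha> + \<beta>) = 1"
      using L by (simp flip: powr_mult)
    then show ?thesis unfolding Meq by (metis (no_types, lifting) mult.assoc mult.left_commute mult_1_right)
  qed
  also have "\<dots> \<le> (1/p) * A + (1/q) * B" by (rule N)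
  finally have "c * (2 / L) powr (\<alpha> + \<beta>) \<le> ((1/p) * A + (1/q) * B) / D"
    using D by (simp add: pos_le_divide_eq)
  then show ?thesis
    unfolding c_def L_def D_def A_def B_def Iu(4) Iv(4) .
qed



theorem theorem1p2:
  fixes p q \<alpha> \<beta> a b :: real
  assumes "1 < p" and "1 < q" and "\<alpha> > 0" and "\<beta> > 0"
    and "\<alpha> / p + \<beta> / q = 1" and "a < b"
  shows "inverse (\<alpha> powr (\<alpha> / p) * \<beta> powr (\<beta> / q)) * (2 / pi_s (\<alpha> + \<beta>)) powr (\<alpha> + \<beta>)
           * (Lambda1 (\<alpha> + \<beta>) a b / (\<alpha> + \<beta> - 1)) \<le> lambda1 p q \<alpha> \<beta> a b"
proof -
  note p = assms(1) and q = assms(2) and al = assms(3) and be = assms(4) and pq = assms(5) and ab = assms(6)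
  define s where "s = \<alpha> + \<beta>"
  define c where "c = inverse (\<alpha> powr (\<alpha> / p) * \<beta> powr (\<beta> / q))"
  define K where "K = c * (2 / (b - a)) powr s"
  have c: "0 < c" using al be by (simp add: c_def)
  have s: "1 < s"
  proof -
    have "\<alpha> / p < \<alpha>" using al p by (simp add: divide_less_eq)
    moreover have "\<beta> / q < \<beta>" using be q by (simp add: divide_less_eq)
    ultimately show ?thesis using pq by (simp add: s_def)
  qed
  have P: "0 < Ps s" by (rule Ps_pos[OF s])
  have "inverse (\<alpha> powr (\<alpha> / p) * \<beta> powr (\<beta> / q)) * (2 / pi_s (\<alpha> + \<beta>)) powr (\<alpha> + \<beta>)
           * (Lambda1 (\<alpha> + \<beta>) a b / (\<alpha> + \<beta> - 1))
        = c * (1 / Ps s) powr s * (Lambda1 s a b / (s - 1))"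
    unfolding c_def s_def[symmetric] pi_s_Ps[OF s] by simp
  also have "\<dots> \<le> c * (1 / Ps s) powr s * (kk s a b powr s * (s - 1) / (s - 1))"
    using Lambda1_le[OF s ab] c s by (intro mult_left_mono divide_right_mono) auto
  also have "\<dots> = c * ((1 / Ps s) powr s * kk s a b powr s)"
    using s by simp
  also have "(1 / Ps s) powr s * kk s a b powr s = ((1 / Ps s) * kk s a b) powr s"
    by (rule powr_mult[symmetric])
  also have "(1 / Ps s) * kk s a b = 2 / (b - a)" using P by (simp add: kk_def)
  finally have lhs: "inverse (\<alpha> powr (\<alpha> / p) * \<beta> powr (\<beta> / q)) * (2 / pi_s (\<alpha> + \<beta>)) powr (\<alpha> + \<beta>)
           * (Lambda1 (\<alpha> + \<beta>) a b / (\<alpha> + \<beta> - 1)) \<le> K" unfolding K_def .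
  let ?X = "{((1/p) * (LINT t:{a..b}|lborel. \<bar>g t\<bar> powr p) + (1/q) * (LINT t:{a..b}|lborel. \<bar>h t\<bar> powr q))
        / (LINT t:{a..b}|lborel. \<bar>u t\<bar> powr \<alpha> * \<bar>v t\<bar> powr \<beta>)
      | u g v h. W10 p a b u g \<and> W10 q a b v h \<and>
                 (LINT t:{a..b}|lborel. \<bar>u t\<bar> powr \<alpha> * \<bar>v t\<bar> powr \<beta>) > 0}"
  have ne: "?X \<noteq> {}"
  proof -
    have "(LINT t:{a..b}|lborel. \<bar>ww s a b t\<bar> powr \<alpha> * \<bar>ww s a b t\<bar> powr \<beta>)
        = (LINT t:{a..b}|lborel. \<bar>ww s a b t\<bar> powr s)"
      by (simp add: s_def powr_add)
    also have "\<dots> = (b - a) / s" by (rule ww_int_s[OF s ab])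
    finally have "0 < (LINT t:{a..b}|lborel. \<bar>ww s a b t\<bar> powr \<alpha> * \<bar>ww s a b t\<bar> powr \<beta>)"
      using s ab by simp
    moreover have "W10 p a b (ww s a b) (gw s a b)" "W10 q a b (ww s a b) (gw s a b)"
      using W10_ww[OF s ab] p q by auto
    ultimately show ?thesis by blast
  qed
  have "K \<le> lambda1 p q \<alpha> \<beta> a b"
    unfolding lambda1_def
  proof (rule cInf_greatest[OF ne])
    fix x assume "x \<in> ?X"
    then show "K \<le> x" unfolding K_def c_def s_def
      using quot_lower[OF p q al be pq ab] by blast
  qed
  then show ?thesis using lhs by simp
qed


end
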